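(* Assume the standing assumptions in the context and in addition $r>0$. Fix $j\in\{1,2\}$ and consider the equation $$\rho v_j(x)=H(x,y_j,Dv_j(x)),\qquad x\ge\underline{x}.$$ The function $\check{\mathsf{u}}_j(x)=\frac{1}{\rho}\frac{(rx+y_j)^{1-\gamma}}{1-\gamma}$ is a viscosity subsolution of this equation on $[\underline{x},+\infty)$, and the function $$\check{\mathsf{v}}_j(x)=\Big(\frac{\rho-r}{\gamma}+r\Big)^{-\gamma}\frac{(x+y_j/r)^{1-\gamma}}{1-\gamma}$$ is a viscosity supersolution of this equation on $(\underline{x},+\infty)$.
   Context: Standing assumptions: $\rho>0$; $-\infty<r<\rho$; $0<y_1<y_2$; $\gamma>1$; $\underline{x}\le0$ with $\rho\underline{x}+y_j>0$ for $j=1,2$. Utility $u(c)=\frac{c^{1-\gamma}}{1-\gamma}$; Hamiltonian $H(x,y_j,p)=\sup_{c\ge0}\{u(c)+(rx+y_j-c)p\}$, equal to $(rx+y_j)p+\frac{\gamma}{1-\gamma}p^{1-1/\gamma}$ for $p\ge0$ and $+\infty$ for $p<0$. A u.s.c. $w$ is a viscosity subsolution on $S\subseteq[\underline{x},\infty)$ if whenever $\varphi$ smooth and $w-\varphi$ has a local max (relative to $[\underline{x},\infty)$) at $x_0\in S$, then $\rho w(x_0)\le H(x_0,y_j,D\varphi(x_0))$; an l.s.c. $w$ is a viscosity supersolution on $S$ if at local minima $x_0\in S$ of $w-\varphi$, $\rho w(x_0)\ge H(x_0,y_j,D\varphi(x_0))$. *)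

theory Defs
  imports "HOL-Analysis.Analysis"
begin

text \<open>CRRA utility u(c) = c^(1-gamma)/(1-gamma) with gamma > 1, valued in the extended reals;
  u(0) = -infinity (the limit as c tends to 0 when gamma > 1).\<close>
definition crra_u :: "real \<Rightarrow> real \<Rightarrow> ereal" where
  "crra_u \<gamma> c = (if c > 0 then ereal (c powr (1 - \<gamma>) / (1 - \<gamma>)) else -\<infinity>)"

definition hamiltonian :: "real \<Rightarrow> real \<Rightarrow> real \<Rightarrow> real \<Rightarrow> real \<Rightarrow> ereal" where
  "hamiltonian \<gamma> r x y p = (SUP c\<in>{0..}. crra_u \<gamma> c + ereal ((r * x + y - c) * p))"

definition test_fun :: "(real \<Rightarrow> real) \<Rightarrow> bool" where
  "test_fun \<phi> \<longleftrightarrow> (\<exists>\<phi>'. (\<forall>x. (\<phi> has_real_derivative \<phi>' x) (at x)) \<and> continuous_on UNIV \<phi>')"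

definition usc_on :: "real set \<Rightarrow> (real \<Rightarrow> real) \<Rightarrow> bool" where
  "usc_on D w \<longleftrightarrow> (\<forall>x0\<in>D. \<forall>e>0. \<exists>d>0. \<forall>x\<in>D. \<bar>x - x0\<bar> < d \<longrightarrow> w x < w x0 + e)"

definition lsc_on :: "real set \<Rightarrow> (real \<Rightarrow> real) \<Rightarrow> bool" where
  "lsc_on D w \<longleftrightarrow> (\<forall>x0\<in>D. \<forall>e>0. \<exists>d>0. \<forall>x\<in>D. \<bar>x - x0\<bar> < d \<longrightarrow> w x > w x0 - e)"

definition loc_max_rel :: "real \<Rightarrow> (real \<Rightarrow> real) \<Rightarrow> real \<Rightarrow> bool" where
  "loc_max_rel xlow f x0 \<longleftrightarrow> (\<exists>e>0. \<forall>x\<in>{xlow..}. \<bar>x - x0\<bar> < e \<longrightarrow> f x \<le> f x0)"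

definition loc_min_rel :: "real \<Rightarrow> (real \<Rightarrow> real) \<Rightarrow> real \<Rightarrow> bool" where
  "loc_min_rel xlow f x0 \<longleftrightarrow> (\<exists>e>0. \<forall>x\<in>{xlow..}. \<bar>x - x0\<bar> < e \<longrightarrow> f x \<ge> f x0)"

definition visc_sub :: "real \<Rightarrow> real \<Rightarrow> real \<Rightarrow> real \<Rightarrow> real \<Rightarrow> real set \<Rightarrow> (real \<Rightarrow> real) \<Rightarrow> bool" where
  "visc_sub \<rho> r \<gamma> y xlow S w \<longleftrightarrow> usc_on {xlow..} w \<and>
     (\<forall>\<phi> x0. test_fun \<phi> \<longrightarrow> x0 \<in> S \<longrightarrow> loc_max_rel xlow (\<lambda>x. w x - \<phi> x) x0 \<longrightarrow>
        ereal (\<rho> * w x0) \<le> hamiltonian \<gamma> r x0 y (deriv \<phi> x0))"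

definition visc_super :: "real \<Rightarrow> real \<Rightarrow> real \<Rightarrow> real \<Rightarrow> real \<Rightarrow> real set \<Rightarrow> (real \<Rightarrow> real) \<Rightarrow> bool" where
  "visc_super \<rho> r \<gamma> y xlow S w \<longleftrightarrow> lsc_on {xlow..} w \<and>
     (\<forall>\<phi> x0. test_fun \<phi> \<longrightarrow> x0 \<in> S \<longrightarrow> loc_min_rel xlow (\<lambda>x. w x - \<phi> x) x0 \<longrightarrow>
        ereal (\<rho> * w x0) \<ge> hamiltonian \<gamma> r x0 y (deriv \<phi> x0))"

end

theory Submission
  imports Defs
begin

lemma bern_powr:
  fixes t a :: real
  assumes "t > 0" "a < 0"
  shows "t powr a \<ge> 1 + a * (t - 1)"
proof -
  have "ln t \<le> t - 1" using assms(1) by (rule ln_le_minus_one)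
  hence "a * (t - 1) \<le> a * ln t" using assms(2) by (simp add: mult_left_mono_neg)
  also have "1 + a * ln t \<le> exp (a * ln t)" by (rule exp_ge_add_one_self)
  also have "exp (a * ln t) = t powr a" using assms(1) by (simp add: powr_def)
  finally show ?thesis by linarith
qed

lemma young_crra:
  fixes a c g :: real
  assumes "a > 0" "c > 0" "g > 1"
  shows "c powr (1 - g) / (1 - g) - c * a powr (- g) \<le> g / (1 - g) * a powr (1 - g)"
proof -
  define t where "t = c / a"
  have t: "t > 0" using assms by (simp add: t_def)
  have c: "c = a * t" using assms by (simp add: t_def)
  have b: "t powr (1 - g) \<ge> 1 + (1 - g) * (t - 1)" using bern_powr[OF t] assms by simp
  have e1: "c powr (1 - g) = a powr (1 - g) * t powr (1 - g)"
    using c assms t by (simp add: powr_mult)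
  have e2: "c * a powr (- g) = a powr (1 - g) * t"
    using c assms by (simp add: powr_diff powr_minus field_simps powr_add)
  have ap: "a powr (1 - g) > 0" using assms by simp
  have "t powr (1 - g) / (1 - g) - t \<le> g / (1 - g)"
  proof -
    have "t powr (1 - g) + (g - 1) * t \<ge> g" using b by (simp add: algebra_simps)
    hence "- (t powr (1 - g)) - (g - 1) * t \<le> - g" by linarith
    hence "(- (t powr (1 - g)) - (g - 1) * t) / (g - 1) \<le> - g / (g - 1)"
      using assms by (metis divide_right_mono diff_gt_0_iff_gt less_eq_real_def minus_divide_left)
    moreover have "(- (t powr (1 - g)) - (g - 1) * t) / (g - 1) = t powr (1 - g) / (1 - g) - t"
      using assms by (simp add: field_simps)
    moreover have "- g / (g - 1) = g / (1 - g)" using assms by (simp add: field_simps)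
    ultimately show ?thesis by simp
  qed
  hence "a powr (1 - g) * (t powr (1 - g) / (1 - g) - t) \<le> a powr (1 - g) * (g / (1 - g))"
    using ap by (intro mult_left_mono) auto
  thus ?thesis using e1 e2 by (simp add: algebra_simps)
qed

lemma cont_usc_lsc:
  assumes "continuous_on D w"
  shows "usc_on D w" "lsc_on D w"
  using assms unfolding usc_on_def lsc_on_def continuous_on_iff dist_real_def
  by (metis abs_diff_less_iff)+


lemma ham_lower:
  assumes "c > 0"
  shows "crra_u g c + ereal ((r * x + y - c) * p) \<le> hamiltonian g r x y p"
  unfolding hamiltonian_def using assms by (intro SUP_upper) auto

lemma sub_part:
  fixes \<rho> r g y xlow :: real
  assumes rho: "\<rho> > 0" and pos: "\<And>x. x \<ge> xlow \<Longrightarrow> r * x + y > 0" and g: "g > 1"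
  shows "visc_sub \<rho> r g y xlow {xlow..} (\<lambda>x. (1 / \<rho>) * ((r * x + y) powr (1 - g) / (1 - g)))"
  unfolding visc_sub_def
proof (intro conjI allI impI)
  show "usc_on {xlow..} (\<lambda>x. (1 / \<rho>) * ((r * x + y) powr (1 - g) / (1 - g)))"
    apply (rule cont_usc_lsc)
    apply (intro continuous_intros)
    using pos g by (auto intro!: continuous_intros) (metis less_irrefl)
next
  fix \<phi> x0 assume "x0 \<in> {xlow..}"
  hence c: "r * x0 + y > 0" using pos by auto
  have "ereal (\<rho> * ((1 / \<rho>) * ((r * x0 + y) powr (1 - g) / (1 - g))))
      = crra_u g (r * x0 + y) + ereal ((r * x0 + y - (r * x0 + y)) * deriv \<phi> x0)"
    using rho c by (simp add: crra_u_def)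
  also have "\<dots> \<le> hamiltonian g r x0 y (deriv \<phi> x0)" by (rule ham_lower[OF c])
  finally show "ereal (\<rho> * ((1 / \<rho>) * ((r * x0 + y) powr (1 - g) / (1 - g))))
      \<le> hamiltonian g r x0 y (deriv \<phi> x0)" .
qed

lemma ham_upper:
  fixes a z g r y x :: real
  assumes "a > 0" "g > 1"
  shows "hamiltonian g r x y (a powr (- g)) \<le> ereal ((r * x + y) * a powr (- g) + g / (1 - g) * a powr (1 - g))"
  unfolding hamiltonian_def
proof (rule SUP_least)
  fix c :: real assume "c \<in> {0..}"
  show "crra_u g c + ereal ((r * x + y - c) * a powr - g)
      \<le> ereal ((r * x + y) * a powr - g + g / (1 - g) * a powr (1 - g))"
  proof (cases "c > 0")
    case True
    have "c powr (1 - g) / (1 - g) - c * a powr (- g) \<le> g / (1 - g) * a powr (1 - g)"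
      using young_crra[OF assms(1) True assms(2)] .
    thus ?thesis using True by (simp add: crra_u_def algebra_simps)
  next
    case False thus ?thesis by (simp add: crra_u_def)
  qed
qed


lemma super_part:
  fixes \<rho> r g y xlow :: real
  assumes rho: "\<rho> > 0" and r: "r > 0" and rr: "r < \<rho>"
    and pos: "\<And>x. x \<ge> xlow \<Longrightarrow> x + y / r > 0" and g: "g > 1"
  shows "visc_super \<rho> r g y xlow {xlow<..}
           (\<lambda>x. ((\<rho> - r) / g + r) powr (- g) * ((x + y / r) powr (1 - g) / (1 - g)))"
  unfolding visc_super_def
proof (intro conjI allI impI)
  define A where "A = (\<rho> - r) / g + r"
  have A: "A > 0" using rr r g unfolding A_def by (simp add: add_pos_pos)
  show "lsc_on {xlow..} (\<lambda>x. ((\<rho> - r) / g + r) powr (- g) * ((x + y / r) powr (1 - g) / (1 - g)))"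
    apply (rule cont_usc_lsc)
    using pos g by (auto intro!: continuous_intros) (metis less_irrefl)
  fix \<phi> x0 assume tf: "test_fun \<phi>" and x0: "x0 \<in> {xlow<..}"
    and lm: "loc_min_rel xlow (\<lambda>x. ((\<rho> - r) / g + r) powr (- g) * ((x + y / r) powr (1 - g) / (1 - g)) - \<phi> x) x0"
  define v where "v = (\<lambda>x. A powr (- g) * ((x + y / r) powr (1 - g) / (1 - g)))"
  define z where "z = x0 + y / r"
  have z: "z > 0" using pos x0 unfolding z_def by auto
  obtain \<phi>' where d\<phi>: "\<And>x. (\<phi> has_real_derivative \<phi>' x) (at x)"
    using tf unfolding test_fun_def by auto
  have dphi: "deriv \<phi> x0 = \<phi>' x0" using d\<phi> by (rule DERIV_imp_deriv)
  have dv: "(v has_real_derivative A powr (- g) * z powr (- g)) (at x0)"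
  proof -
    have d1: "((\<lambda>x. x + y / r) has_real_derivative 1) (at x0)"
      by (auto intro!: derivative_eq_intros)
    have "((\<lambda>x. (x + y / r) powr (1 - g)) has_real_derivative (1 - g) * z powr (1 - g - of_nat 1) * 1) (at x0)"
      using DERIV_fun_powr[OF d1, of "1 - g"] z unfolding z_def by simp
    hence "(v has_real_derivative A powr (- g) * (((1 - g) * z powr (1 - g - of_nat 1) * 1) / (1 - g))) (at x0)"
      unfolding v_def by (intro DERIV_cmult DERIV_cdivide)
    thus ?thesis using g by simp
  qed
  obtain e where e: "e > 0" and eb: "\<forall>x\<in>{xlow..}. \<bar>x - x0\<bar> < e \<longrightarrow> v x - \<phi> x \<ge> v x0 - \<phi> x0"
    using lm unfolding loc_min_rel_def v_def A_def by auto
  have "A powr (- g) * z powr (- g) - \<phi>' x0 = 0"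
  proof (rule DERIV_local_min[where f = "\<lambda>x. v x - \<phi> x"])
    show "((\<lambda>x. v x - \<phi> x) has_real_derivative A powr (- g) * z powr (- g) - \<phi>' x0) (at x0)"
      using dv d\<phi> by (intro DERIV_diff)
    show "0 < min e (x0 - xlow)" using e x0 by auto
    show "\<forall>y. \<bar>x0 - y\<bar> < min e (x0 - xlow) \<longrightarrow> v x0 - \<phi> x0 \<le> v y - \<phi> y"
      using eb by (auto simp: abs_minus_commute)
  qed
  hence p: "deriv \<phi> x0 = (A * z) powr (- g)" using dphi A z by (simp add: powr_mult)
  have "hamiltonian g r x0 y (deriv \<phi> x0)
      \<le> ereal ((r * x0 + y) * (A * z) powr (- g) + g / (1 - g) * (A * z) powr (1 - g))"
    unfolding p using ham_upper[of "A * z" g r x0 y] A z g by simp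
  also have "(r * x0 + y) * (A * z) powr (- g) + g / (1 - g) * (A * z) powr (1 - g) = \<rho> * v x0"
  proof -
    define M where "M = A powr (- g) * z powr (1 - g)"
    have h1: "r * x0 + y = r * z" using r unfolding z_def by (simp add: field_simps)
    have h2: "z * (A * z) powr (- g) = M"
      unfolding M_def using A z by (simp add: powr_mult powr_diff powr_minus field_simps)
    have h3: "(A * z) powr (1 - g) = A * M"
      unfolding M_def using A z by (simp add: powr_mult powr_diff powr_minus field_simps)
    have h4: "v x0 = M / (1 - g)" unfolding v_def M_def z_def by simp
    have gA: "g * A = \<rho> - r + r * g" unfolding A_def using g by (simp add: field_simps)
    have "(r * x0 + y) * (A * z) powr (- g) + g / (1 - g) * (A * z) powr (1 - g)
        = r * M + g * A * M / (1 - g)" using h1 h2 h3 by (simp add: algebra_simps)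
    also have "\<dots> = \<rho> * M / (1 - g)" unfolding gA using g by (simp add: field_simps)
    finally show ?thesis using h4 by simp
  qed
  finally show "hamiltonian g r x0 y (deriv \<phi> x0)
      \<le> ereal (\<rho> * (((\<rho> - r) / g + r) powr (- g) * ((x0 + y / r) powr (1 - g) / (1 - g))))"
    unfolding v_def A_def .
qed


theorem mainTheorem7:
  fixes \<rho> r \<gamma> y1 y2 xlow :: real and j :: nat
  assumes "\<rho> > 0" and "r < \<rho>" and "r > 0"
    and "0 < y1" and "y1 < y2" and "\<gamma> > 1"
    and "xlow \<le> 0" and "\<rho> * xlow + y1 > 0" and "\<rho> * xlow + y2 > 0"
    and "j \<in> {1, 2}"
  defines "yj \<equiv> (if j = 1 then y1 else y2)"
  shows "visc_sub \<rho> r \<gamma> yj xlow {xlow..}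
           (\<lambda>x. (1 / \<rho>) * ((r * x + yj) powr (1 - \<gamma>) / (1 - \<gamma>)))
       \<and> visc_super \<rho> r \<gamma> yj xlow {xlow<..}
           (\<lambda>x. ((\<rho> - r) / \<gamma> + r) powr (- \<gamma>) * ((x + yj / r) powr (1 - \<gamma>) / (1 - \<gamma>)))"
proof -
  have yx: "\<rho> * xlow + yj > 0" using assms unfolding yj_def by auto
  have pos: "r * x + yj > 0" if "x \<ge> xlow" for x
  proof -
    have "r * xlow \<ge> \<rho> * xlow" using assms by (intro mult_right_mono_neg) auto
    moreover have "r * x \<ge> r * xlow" using that assms by simp
    ultimately show ?thesis using yx by linarith
  qed
  have pos2: "x + yj / r > 0" if "x \<ge> xlow" for x
  proof -
    have "x + yj / r = (r * x + yj) / r" using assms by (simp add: field_simps)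
    thus ?thesis using pos[OF that] assms by simp
  qed
  show ?thesis
    using sub_part[of \<rho> xlow r yj \<gamma>, OF assms(1) pos assms(6)]
      super_part[of \<rho> r xlow yj \<gamma>, OF assms(1) assms(3) assms(2) pos2 assms(6)]
    by simp
qed

end
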